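(* Let $\Gamma$ be an analytic Jordan curve with interior $G_1$, exterior $G_2=\mathbb{C}_\infty\setminus(\Gamma\cup G_1)$, $u_0\in\Gamma$, and let $\Phi_1:\mathbb{D}\to G_1$, $\Phi_2:\mathbb{D}^*\to G_2$ be conformal bijections, extended analytically and injectively across the unit circle, with $\Phi_j(1)=u_0$ and $|\Phi_j'(1)|=1$ ($j=1,2$). Put $F:=\Phi_2^{-1}\circ\Phi_1$ (defined and analytic in a neighbourhood of the unit circle), and for $a\in\mathbb{D}^*$ and $\xi$ near the unit circle put $$H(a,\xi):=\frac{B(a,F(\xi))}{B(a,\xi)}.$$ Let $K\subset\mathbb{D}^*$ be closed in $\mathbb{C}_\infty$. Then there exist $\delta>0$ and $C>0$ such that for all $a\in K$ and all $\xi$ with $1\le|\xi|\le1+\delta$, $$\log|H(a,\xi)|\le C\,(|\xi|-1)\,|\xi-1|.$$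
   Context: $\mathbb{D}=\{|v|<1\}$, $\mathbb{D}^*=\{|v|>1\}\cup\{\infty\}$. $B(a,v)=\frac{1-\bar a v}{v-a}$ is the Blaschke factor with pole at $a\in\mathbb{D}^*\setminus\{\infty\}$, and $B(\infty,v):=v$; thus $\log|B(a,v)|=g_{\mathbb{D}^*}(v,a)$ for $|v|>1$. Note $F(1)=1$, $F'(1)=1$, and $F$ maps the unit circle onto itself. An analytic Jordan curve is the image of the unit circle under a function analytic and injective on an annulus containing it. *)

theory Defs
  imports "HOL-Analysis.Analysis"
begin

text \<open>The Riemann sphere \<open>\<complex>\<^sub>\<infinity>\<close> is modelled as \<open>complex option\<close>,
  with \<open>None\<close> playing the role of the point \<open>\<infinity>\<close>.\<close>

type_synonym riem = "complex option"

definition rs_inv :: "riem \<Rightarrow> riem" where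
  "rs_inv p = (case p of None \<Rightarrow> Some 0
                | Some z \<Rightarrow> (if z = 0 then None else Some (1 / z)))"

definition rs_chart_loc :: "(riem \<Rightarrow> riem) \<Rightarrow> riem \<Rightarrow> complex \<Rightarrow> riem" where
  "rs_chart_loc f p w = (case p of Some z \<Rightarrow> f (Some (z + w)) | None \<Rightarrow> f (rs_inv (Some w)))"

text \<open>Analyticity of a map between Riemann spheres at a point: locally, in the
  chart, either the map is finite-valued and holomorphic, or it avoids 0 and its
  reciprocal (target chart at \<open>\<infinity>\<close>) is holomorphic.\<close>
definition rs_analytic_at :: "(riem \<Rightarrow> riem) \<Rightarrow> riem \<Rightarrow> bool" where
  "rs_analytic_at f p \<longleftrightarrow> (\<exists>e>0.
      ((\<forall>w\<in>ball 0 e. rs_chart_loc f p w \<noteq> None) \<and>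
         (\<lambda>w. the (rs_chart_loc f p w)) holomorphic_on ball 0 e)
    \<or> ((\<forall>w\<in>ball 0 e. rs_chart_loc f p w \<noteq> Some 0) \<and>
         (\<lambda>w. the (rs_inv (rs_chart_loc f p w))) holomorphic_on ball 0 e))"

definition rs_analytic_on :: "(riem \<Rightarrow> riem) \<Rightarrow> riem set \<Rightarrow> bool" where
  "rs_analytic_on f S \<longleftrightarrow> (\<forall>p\<in>S. rs_analytic_at f p)"

definition rs_closed :: "riem set \<Rightarrow> bool" where
  "rs_closed K \<longleftrightarrow> closed {z. Some z \<in> K} \<and> (None \<notin> K \<longrightarrow> bounded {z. Some z \<in> K})"

definition ext_disc :: "real \<Rightarrow> riem set" where
  "ext_disc \<rho> = insert None (Some ` {v. norm v > \<rho>})"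

abbreviation Dstar :: "riem set" where "Dstar \<equiv> ext_disc 1"

definition blaschke :: "riem \<Rightarrow> complex \<Rightarrow> complex" where
  "blaschke a v = (case a of None \<Rightarrow> v | Some a' \<Rightarrow> (1 - cnj a' * v) / (v - a'))"

definition analytic_jordan_curve :: "complex set \<Rightarrow> bool" where
  "analytic_jordan_curve \<Gamma> \<longleftrightarrow> (\<exists>\<psi> r1 r2. r1 < 1 \<and> 1 < r2 \<and>
      \<psi> holomorphic_on {z. r1 < norm z \<and> norm z < r2} \<and>
      inj_on \<psi> {z. r1 < norm z \<and> norm z < r2} \<and>
      \<Gamma> = \<psi> ` sphere 0 1)"

end

theory Submission
  imports Defs "HOL-Complex_Analysis.Complex_Analysis"
begin

lemma chart0: "rs_chart_loc f p 0 = f p"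
  by (cases p) (auto simp: rs_chart_loc_def rs_inv_def)

lemma hol_isCont: "f holomorphic_on S \<Longrightarrow> open S \<Longrightarrow> x \<in> S \<Longrightarrow> isCont f x"
  by (meson continuous_on_eq_continuous_at holomorphic_on_imp_continuous_on)

lemma chart_lim:
  assumes an: "rs_analytic_at f p" and t: "(t \<longlongrightarrow> 0) sequentially"
    and ev: "eventually (\<lambda>n. rs_chart_loc f p (t n) = Some (w n)) sequentially"
    and w: "(w \<longlongrightarrow> z) sequentially"
  shows "f p = Some z"
proof -
  obtain e where e: "e > 0" and alt:
    "((\<forall>w\<in>ball 0 e. rs_chart_loc f p w \<noteq> None) \<and>
         (\<lambda>w. the (rs_chart_loc f p w)) holomorphic_on ball 0 e)
    \<or> ((\<forall>w\<in>ball 0 e. rs_chart_loc f p w \<noteq> Some 0) \<and>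
         (\<lambda>w. the (rs_inv (rs_chart_loc f p w))) holomorphic_on ball 0 e)"
    using an unfolding rs_analytic_at_def by blast
  have evb: "eventually (\<lambda>n. t n \<in> ball 0 e) sequentially"
    using tendstoD[OF t e] by (simp add: dist_commute)
  show ?thesis
  proof (cases "(\<forall>w\<in>ball 0 e. rs_chart_loc f p w \<noteq> None) \<and>
         (\<lambda>w. the (rs_chart_loc f p w)) holomorphic_on ball 0 e")
    case True
    define G where "G = (\<lambda>w. the (rs_chart_loc f p w))"
    have "isCont G 0"
    proof -
      have Gh: "G holomorphic_on ball 0 e" using True unfolding G_def by blast
      show ?thesis using hol_isCont[OF Gh open_ball, of 0] e by simp
    qed
    then have "((\<lambda>n. G (t n)) \<longlongrightarrow> G 0) sequentially"
      using t isCont_tendsto_compose by blast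
    moreover have "eventually (\<lambda>n. G (t n) = w n) sequentially"
      using ev by eventually_elim (simp add: G_def)
    ultimately have "(w \<longlongrightarrow> G 0) sequentially"
      by (rule Lim_transform_eventually)
    then have "G 0 = z" using w LIMSEQ_unique by blast
    moreover have "rs_chart_loc f p 0 \<noteq> None" using True e by auto
    ultimately show ?thesis unfolding G_def chart0 by auto
  next
    case False
    with alt have A: "\<forall>w\<in>ball 0 e. rs_chart_loc f p w \<noteq> Some 0"
      and H: "(\<lambda>w. the (rs_inv (rs_chart_loc f p w))) holomorphic_on ball 0 e" by blast+
    define h where "h = (\<lambda>w. the (rs_inv (rs_chart_loc f p w)))"
    have "isCont h 0"
    proof -
      have Gh: "h holomorphic_on ball 0 e" using H unfolding h_def by blast
      show ?thesis using hol_isCont[OF Gh open_ball, of 0] e by simp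
    qed
    then have hl: "((\<lambda>n. h (t n)) \<longlongrightarrow> h 0) sequentially"
      using t isCont_tendsto_compose by blast
    have evh: "eventually (\<lambda>n. w n * h (t n) = 1) sequentially"
      using ev evb
    proof eventually_elim
      case (elim n)
      have "rs_chart_loc f p (t n) \<noteq> Some 0" using A elim(2) by blast
      then have "w n \<noteq> 0" using elim(1) by auto
      then show ?case using elim by (simp add: h_def rs_inv_def)
    qed
    have "((\<lambda>n. w n * h (t n)) \<longlongrightarrow> z * h 0) sequentially"
      using w hl by (rule tendsto_mult)
    moreover have "((\<lambda>n. w n * h (t n)) \<longlongrightarrow> 1) sequentially"
    proof (rule Lim_transform_eventually[OF tendsto_const])
      show "\<forall>\<^sub>F n in sequentially. 1 = w n * h (t n)" by (rule eventually_mono[OF evh]) simp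
    qed
    ultimately have zh: "z * h 0 = 1" using LIMSEQ_unique by blast
    show ?thesis
    proof (cases "f p")
      case None
      then have "h 0 = 0" unfolding h_def chart0 by (simp add: rs_inv_def)
      then show ?thesis using zh by simp
    next
      case (Some q)
      have c0: "rs_chart_loc f p 0 \<noteq> Some 0" using A e by simp
      have "q \<noteq> 0" using c0 Some by (simp add: chart0)
      then have h0: "h 0 = 1 / q" using Some unfolding h_def chart0 by (simp add: rs_inv_def)
      have "z / q = 1" using zh unfolding h0 by simp
      then have "z = q" by (simp add: divide_eq_1_iff)
      then show ?thesis using Some by simp
    qed
  qed
qed

lemma F_est:
  fixes Fh :: "complex \<Rightarrow> complex"
  assumes HF: "Fh holomorphic_on U" and oU: "open U" and sU: "sphere 0 1 \<subseteq> U" and nU: "-U \<noteq> {}"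
    and n1: "\<And>\<zeta>. norm \<zeta> = 1 \<Longrightarrow> norm (Fh \<zeta>) = 1" and F1: "Fh 1 = 1" and dF1: "norm (deriv Fh 1) = 1"
  shows "\<exists>\<epsilon>>0. \<exists>C>0. \<exists>L2>0. \<forall>\<xi>. 1 \<le> norm \<xi> \<and> norm \<xi> \<le> 1+\<epsilon> \<longrightarrow> \<xi> \<in> U \<and>
            norm (Fh \<xi>) \<le> norm \<xi> + C*(norm \<xi> - 1)*norm(\<xi>-1) \<and> norm (Fh \<xi> - 1) \<le> L2 * norm (\<xi> - 1)"
proof -
  have sd: "setdist (sphere 0 1) (-U) > 0"
  proof -
    have "setdist (sphere (0::complex) 1) (-U) \<noteq> 0"
      using setdist_eq_0_compact_closed[of "sphere (0::complex) 1" "-U"] oU sU nU by auto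
    then show ?thesis using setdist_pos_le by (metis less_eq_real_def)
  qed
  define \<epsilon> where "\<epsilon> = min (1/2) (setdist (sphere 0 1) (-U) / 2)"
  have \<epsilon>: "0 < \<epsilon>" "\<epsilon> \<le> 1/2" "\<epsilon> < setdist (sphere 0 1) (-U)" using sd by (auto simp: \<epsilon>_def)
  define Kc where "Kc = cball (0::complex) (1+\<epsilon>) - ball 0 (1-\<epsilon>)"
  have Kc_iff: "\<xi> \<in> Kc \<longleftrightarrow> 1 - \<epsilon> \<le> norm \<xi> \<and> norm \<xi> \<le> 1 + \<epsilon>" for \<xi> by (auto simp: Kc_def)
  have radial: "norm (\<xi> / of_real (norm \<xi>)) = 1 \<and> norm (\<xi> - \<xi> / of_real (norm \<xi>)) = \<bar>norm \<xi> - 1\<bar>"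
    if "\<xi> \<noteq> 0" for \<xi> :: complex
  proof -
    have nz: "norm \<xi> > 0" using that by simp
    have "\<xi> - \<xi> / of_real (norm \<xi>) = of_real (norm \<xi> - 1) * (\<xi> / of_real (norm \<xi>))"
      using nz by (simp add: field_simps)
    moreover have "norm (\<xi> / of_real (norm \<xi>)) = 1" using nz by (simp add: norm_divide)
    ultimately show ?thesis by (metis norm_mult norm_of_real mult.right_neutral)
  qed
  have KcU: "Kc \<subseteq> U"
  proof
    fix \<xi> assume "\<xi> \<in> Kc"
    then have a: "1 - \<epsilon> \<le> norm \<xi>" "norm \<xi> \<le> 1+\<epsilon>" by (auto simp: Kc_iff)
    then have nz: "\<xi> \<noteq> 0" using \<epsilon> by auto
    define \<zeta> where "\<zeta> = \<xi> / of_real (norm \<xi>)"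
    have z1: "\<zeta> \<in> sphere 0 1" and dz: "dist \<zeta> \<xi> = \<bar>norm \<xi> - 1\<bar>"
      using radial[OF nz] by (simp_all add: \<zeta>_def dist_norm norm_minus_commute)
    show "\<xi> \<in> U"
    proof (rule ccontr)
      assume "\<xi> \<notin> U"
      then have "setdist (sphere 0 1) (-U) \<le> dist \<zeta> \<xi>" using setdist_le_dist z1 by blast
      then show False using a \<epsilon> dz by linarith
    qed
  qed
  have cKc: "compact Kc" unfolding Kc_def by (intro compact_diff compact_cball open_ball)
  define D1 where "D1 = deriv Fh"
  define D2 where "D2 = deriv D1"
  have HD1: "D1 holomorphic_on U" unfolding D1_def using HF oU by (rule holomorphic_deriv)
  have HD2: "D2 holomorphic_on U" unfolding D2_def using HD1 oU by (rule holomorphic_deriv)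
  have bnd: "\<exists>B>0. \<forall>x\<in>Kc. norm (f x) \<le> B" if "f holomorphic_on U" for f
  proof -
    have "continuous_on Kc f" using that KcU holomorphic_on_imp_continuous_on continuous_on_subset by blast
    then have "bounded (f ` Kc)" using cKc compact_continuous_image compact_imp_bounded by blast
    then show ?thesis unfolding bounded_pos by auto
  qed
  obtain M0 where M0: "M0 > 0" "\<forall>x\<in>Kc. norm (Fh x) \<le> M0" using bnd[OF HF] by blast
  obtain M1 where M1: "M1 > 0" "\<forall>x\<in>Kc. norm (D1 x) \<le> M1" using bnd[OF HD1] by blast
  obtain M2 where M2: "M2 > 0" "\<forall>x\<in>Kc. norm (D2 x) \<le> M2" using bnd[OF HD2] by blast
  have cbK: "cball \<zeta> \<epsilon> \<subseteq> Kc" if "norm \<zeta> = 1" for \<zeta>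
  proof
    fix \<xi> assume "\<xi> \<in> cball \<zeta> \<epsilon>"
    then have "norm (\<xi> - \<zeta>) \<le> \<epsilon>" by (simp add: dist_norm norm_minus_commute)
    moreover have "\<bar>norm \<xi> - norm \<zeta>\<bar> \<le> norm (\<xi> - \<zeta>)" by (rule norm_triangle_ineq3)
    ultimately show "\<xi> \<in> Kc" using that by (auto simp: Kc_iff)
  qed
  have d0: "(Fh has_field_derivative D1 x) (at x within S)" if "x \<in> U" for x S
    unfolding D1_def using holomorphic_derivI[OF HF oU that] .
  have d1: "(D1 has_field_derivative D2 x) (at x within S)" if "x \<in> U" for x S
    unfolding D2_def using holomorphic_derivI[OF HD1 oU that] .
  have one: "norm (1::complex) = 1" by simp
  have Tay: "norm (Fh \<xi> - (Fh \<zeta> + D1 \<zeta> * (\<xi> - \<zeta>))) \<le> M2 * norm (\<xi> - \<zeta>)^2"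
    if z: "norm \<zeta> = 1" and xi: "\<xi> \<in> cball \<zeta> \<epsilon>" for \<zeta> \<xi>
  proof -
    define f where "f = (\<lambda>i::nat. if i = 0 then Fh else if i = 1 then D1 else D2)"
    have "norm (f 0 \<xi> - (\<Sum>i\<le>(1::nat). f i \<zeta> * (\<xi> - \<zeta>)^i / fact i)) \<le> M2 * norm (\<xi> - \<zeta>)^(Suc 1) / fact 1"
    proof (rule complex_Taylor[of "cball \<zeta> \<epsilon>"])
      show "convex (cball \<zeta> \<epsilon>)" by simp
      show "\<zeta> \<in> cball \<zeta> \<epsilon>" using \<epsilon> by simp
      show "\<xi> \<in> cball \<zeta> \<epsilon>" by (rule xi)
    next
      fix i :: nat and x assume x: "x \<in> cball \<zeta> \<epsilon>" and i: "i \<le> 1"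
      then have "x \<in> U" using cbK[OF z] KcU by blast
      show "(f i has_field_derivative f (Suc i) x) (at x within cball \<zeta> \<epsilon>)"
      proof (cases "i = 0")
        case True then show ?thesis using d0[OF \<open>x \<in> U\<close>] by (simp add: f_def)
      next
        case False then have "i = 1" using i by simp
        then show ?thesis using d1[OF \<open>x \<in> U\<close>] by (simp add: f_def)
      qed
    next
      fix x assume x: "x \<in> cball \<zeta> \<epsilon>"
      then have "x \<in> Kc" using cbK[OF z] by blast
      then show "norm (f (Suc 1) x) \<le> M2" using M2 by (simp add: f_def)
    qed
    then show ?thesis by (simp add: f_def power2_eq_square)
  qed
  define L where "L = M2 + 2*M1/\<epsilon>"
  have Lip1: "norm (D1 \<zeta> - D1 1) \<le> L * norm (\<zeta> - 1)" if z: "norm \<zeta> = 1" for \<zeta>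
  proof (cases "norm (\<zeta> - 1) \<le> \<epsilon>")
    case True
    have "norm (D1 \<zeta> - D1 1) \<le> M2 * norm (\<zeta> - 1)"
    proof (rule field_differentiable_bound[of "cball 1 \<epsilon>"])
      show "convex (cball (1::complex) \<epsilon>)" by simp
      show "\<zeta> \<in> cball 1 \<epsilon>" using True by (simp add: dist_norm norm_minus_commute)
      show "1 \<in> cball (1::complex) \<epsilon>" using \<epsilon> by simp
    next
      fix x assume x: "x \<in> cball (1::complex) \<epsilon>"
      then have "x \<in> Kc" using cbK[OF one] by blast
      then show "(D1 has_field_derivative D2 x) (at x within cball 1 \<epsilon>)" "norm (D2 x) \<le> M2"
        using d1 KcU M2 by auto
    qed
    moreover have "M2 * norm (\<zeta> - 1) \<le> L * norm (\<zeta> - 1)"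
      unfolding L_def using M1 \<epsilon> by (intro mult_right_mono) auto
    ultimately show ?thesis by linarith
  next
    case False
    have "\<zeta> \<in> Kc" "1 \<in> Kc" using z \<epsilon> by (auto simp: Kc_iff)
    then have "norm (D1 \<zeta>) \<le> M1" "norm (D1 1) \<le> M1" using M1 by auto
    then have "norm (D1 \<zeta> - D1 1) \<le> 2 * M1" using norm_triangle_ineq4[of "D1 \<zeta>" "D1 1"] by linarith
    also have "\<dots> = (2*M1/\<epsilon>) * \<epsilon>" using \<epsilon> by simp
    also have "\<dots> \<le> (2*M1/\<epsilon>) * norm (\<zeta> - 1)" using False M1 \<epsilon> by (intro mult_left_mono) auto
    also have "\<dots> \<le> L * norm (\<zeta> - 1)" unfolding L_def using M2 by (intro mult_right_mono) auto
    finally show ?thesis .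
  qed
  define L2 where "L2 = M1 + (M0+1)/\<epsilon>"
  have Lip0: "norm (Fh \<xi> - 1) \<le> L2 * norm (\<xi> - 1)" if "\<xi> \<in> Kc" for \<xi>
  proof (cases "norm (\<xi> - 1) \<le> \<epsilon>")
    case True
    have "norm (Fh \<xi> - Fh 1) \<le> M1 * norm (\<xi> - 1)"
    proof (rule field_differentiable_bound[of "cball 1 \<epsilon>"])
      show "convex (cball (1::complex) \<epsilon>)" by simp
      show "\<xi> \<in> cball 1 \<epsilon>" using True by (simp add: dist_norm norm_minus_commute)
      show "1 \<in> cball (1::complex) \<epsilon>" using \<epsilon> by simp
    next
      fix x assume x: "x \<in> cball (1::complex) \<epsilon>"
      then have "x \<in> Kc" using cbK[OF one] by blast
      then show "(Fh has_field_derivative D1 x) (at x within cball 1 \<epsilon>)" "norm (D1 x) \<le> M1"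
        using d0 KcU M1 by auto
    qed
    moreover have "M1 * norm (\<xi> - 1) \<le> L2 * norm (\<xi> - 1)"
      unfolding L2_def using M0 \<epsilon> by (intro mult_right_mono) auto
    ultimately show ?thesis using F1 by simp
  next
    case False
    have "norm (Fh \<xi>) \<le> M0" using M0 that by auto
    then have "norm (Fh \<xi> - 1) \<le> M0 + 1" using norm_triangle_ineq4[of "Fh \<xi>" 1] by simp
    also have "\<dots> = ((M0+1)/\<epsilon>) * \<epsilon>" using \<epsilon> by simp
    also have "\<dots> \<le> ((M0+1)/\<epsilon>) * norm (\<xi> - 1)" using False M0 \<epsilon> by (intro mult_left_mono) auto
    also have "\<dots> \<le> L2 * norm (\<xi> - 1)" unfolding L2_def using M1 by (intro mult_right_mono) auto
    finally show ?thesis .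
  qed
  have main: "norm (Fh \<xi>) \<le> norm \<xi> + (2*L + M2)*(norm \<xi> - 1)*norm(\<xi>-1)"
    if a: "1 \<le> norm \<xi>" "norm \<xi> \<le> 1+\<epsilon>" for \<xi>
  proof -
    have nz: "\<xi> \<noteq> 0" using a by auto
    define \<zeta> where "\<zeta> = \<xi> / of_real (norm \<xi>)"
    define t where "t = norm \<xi> - 1"
    have t: "0 \<le> t" "t \<le> \<epsilon>" using a by (auto simp: t_def)
    have z1: "norm \<zeta> = 1" and dz: "norm (\<xi> - \<zeta>) = t"
      using radial[OF nz] a by (simp_all add: \<zeta>_def t_def)
    have xi: "\<xi> \<in> cball \<zeta> \<epsilon>" using dz t by (simp add: dist_norm norm_minus_commute)
    have tle: "t \<le> norm (\<xi> - 1)" using norm_triangle_ineq2[of \<xi> 1] by (simp add: t_def)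
    have z1le: "norm (\<zeta> - 1) \<le> 2 * norm (\<xi> - 1)"
      using norm_triangle_ineq[of "\<zeta> - \<xi>" "\<xi> - 1"] dz tle by (simp add: norm_minus_commute)
    have nD: "norm (D1 \<zeta>) \<le> 1 + L * (2 * norm (\<xi> - 1))"
    proof -
      have "norm (D1 \<zeta>) \<le> norm (D1 1) + norm (D1 \<zeta> - D1 1)" using norm_triangle_ineq2[of "D1 \<zeta>" "D1 1"] by simp
      also have "\<dots> \<le> 1 + L * norm (\<zeta> - 1)" using Lip1[OF z1] dF1 by (simp add: D1_def)
      also have "\<dots> \<le> 1 + L * (2 * norm (\<xi> - 1))" using z1le M1 M2 \<epsilon> unfolding L_def
        by (intro add_left_mono mult_left_mono) auto
      finally show ?thesis .
    qed
    have "norm (Fh \<xi>) \<le> norm (Fh \<zeta> + D1 \<zeta> * (\<xi> - \<zeta>)) + M2 * norm (\<xi> - \<zeta>)^2"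
      using Tay[OF z1 xi] norm_triangle_ineq2[of "Fh \<xi>" "Fh \<zeta> + D1 \<zeta> * (\<xi> - \<zeta>)"] by simp
    also have "\<dots> \<le> 1 + norm (D1 \<zeta>) * t + M2 * t^2"
      using norm_triangle_ineq[of "Fh \<zeta>" "D1 \<zeta> * (\<xi> - \<zeta>)"] n1[OF z1] dz by (simp add: norm_mult)
    also have "\<dots> \<le> 1 + (1 + L * (2 * norm (\<xi> - 1))) * t + M2 * (t * norm (\<xi> - 1))"
      using nD t tle M2 by (intro add_mono mult_right_mono mult_left_mono) (auto simp: power2_eq_square intro: mult_left_mono)
    also have "\<dots> = norm \<xi> + (2*L + M2)*(norm \<xi> - 1)*norm(\<xi>-1)"
      by (simp add: t_def algebra_simps)
    finally show ?thesis .
  qed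
  have "2*M1/\<epsilon> > 0" "(M0+1)/\<epsilon> > 0" using M1 M0 \<epsilon> by auto
  then have Lpos: "L > 0" and L2pos: "L2 > 0" unfolding L_def L2_def using M1 M2 by auto
  have P: "\<forall>\<xi>::complex. 1 \<le> norm \<xi> \<and> norm \<xi> \<le> 1+\<epsilon> \<longrightarrow> \<xi> \<in> U \<and>
            norm (Fh \<xi>) \<le> norm \<xi> + (2*L+M2)*(norm \<xi> - 1)*norm(\<xi>-1) \<and> norm (Fh \<xi> - 1) \<le> L2 * norm (\<xi> - 1)"
  proof (intro allI impI)
    fix \<xi> :: complex assume a: "1 \<le> norm \<xi> \<and> norm \<xi> \<le> 1 + \<epsilon>"
    then have "\<xi> \<in> Kc" by (auto simp: Kc_iff)
    then show "\<xi> \<in> U \<and> norm (Fh \<xi>) \<le> norm \<xi> + (2*L+M2)*(norm \<xi> - 1)*norm(\<xi>-1) \<and> norm (Fh \<xi> - 1) \<le> L2 * norm (\<xi> - 1)"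
      using KcU Lip0 main a by auto
  qed
  have "0 < 2*L+M2" using Lpos M2 by auto
  then show ?thesis using P \<epsilon>(1) L2pos by blast
qed

lemma bl_sq:
  fixes w \<alpha> :: complex assumes "w \<noteq> \<alpha>"
  shows "norm ((1 - cnj \<alpha> * w) / (w - \<alpha>)) ^ 2 = 1 + (norm w ^ 2 - 1) * ((norm \<alpha> ^ 2 - 1) / norm (w - \<alpha>) ^ 2)"
proof -
  have "complex_of_real (norm (1 - cnj \<alpha> * w) ^ 2) = complex_of_real (norm (w - \<alpha>) ^ 2 + (norm w ^ 2 - 1) * (norm \<alpha> ^ 2 - 1))"
    unfolding of_real_add of_real_mult of_real_diff complex_norm_square of_real_1
    by (simp add: algebra_simps)
  then have e: "norm (1 - cnj \<alpha> * w) ^ 2 = norm (w - \<alpha>) ^ 2 + (norm w ^ 2 - 1) * (norm \<alpha> ^ 2 - 1)"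
    using of_real_eq_iff by blast
  have "norm (w - \<alpha>) \<noteq> 0" using assms by auto
  then show ?thesis unfolding norm_divide power_divide e by (simp add: field_simps)
qed

lemma kappa_bound:
  fixes \<alpha> w :: complex and d :: real
  assumes d: "0 < d" and \<alpha>: "1 + d \<le> norm \<alpha>" and w: "norm w \<le> 1 + d/2"
  shows "d / (2*(1+d)) * norm \<alpha> \<le> norm (w - \<alpha>)"
proof -
  have "d / (2*(1+d)) * norm \<alpha> \<le> norm \<alpha> - (1 + d/2)"
  proof -
    have "d * norm \<alpha> \<le> 2*(1+d) * (norm \<alpha> - (1 + d/2))"
    proof -
      have "(1+d)*(2+d) \<le> norm \<alpha> * (2+d)" using mult_right_mono[OF \<alpha>, of "2+d"] d by simp
      then show ?thesis by (simp add: algebra_simps)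
    qed
    then show ?thesis using d by (simp add: field_simps)
  qed
  also have "\<dots> \<le> norm \<alpha> - norm w" using w by simp
  also have "\<dots> \<le> norm (w - \<alpha>)" using norm_triangle_ineq2[of \<alpha> w] by (simp add: norm_minus_commute)
  finally show ?thesis .
qed

lemma bl_est:
  fixes \<alpha> w1 w2 :: complex and d :: real
  assumes d: "0 < d" and \<alpha>: "1 + d \<le> norm \<alpha>"
    and w1: "1 \<le> norm w1" "norm w1 \<le> 1 + d/2" and w2: "1 \<le> norm w2" "norm w2 \<le> 1 + d/2"
  shows "ln (norm (blaschke (Some \<alpha>) w1 / blaschke (Some \<alpha>) w2)) \<le>
     (norm w1^2 - 1) * (2*norm (w1-w2)/(d / (2*(1+d)))^3) + max 0 (norm w1^2 - norm w2^2) / (d / (2*(1+d)))^2"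
proof -
  define \<kappa> where "\<kappa> = d / (2*(1+d))"
  have \<kappa>: "0 < \<kappa>" unfolding \<kappa>_def using d by simp
  have na: "1 \<le> norm \<alpha>" using \<alpha> d by simp
  have kb1: "\<kappa> * norm \<alpha> \<le> norm (w1 - \<alpha>)" and kb2: "\<kappa> * norm \<alpha> \<le> norm (w2 - \<alpha>)"
    unfolding \<kappa>_def using kappa_bound d \<alpha> w1 w2 by auto
  have ka: "0 < \<kappa> * norm \<alpha>" using \<kappa> na by (intro mult_pos_pos) auto
  have ne1: "w1 \<noteq> \<alpha>" and ne2: "w2 \<noteq> \<alpha>" using kb1 kb2 ka by auto
  define Q where "Q = (\<lambda>w::complex. (norm \<alpha> ^ 2 - 1) / norm (w - \<alpha>) ^ 2)"
  define s where "s = 1 / (\<kappa> * norm \<alpha>)"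
  have s: "0 < s" unfolding s_def using ka by simp
  define u1 where "u1 = 1 / (w1 - \<alpha>)"
  define u2 where "u2 = 1 / (w2 - \<alpha>)"
  have u1: "norm u1 \<le> s" unfolding u1_def s_def norm_divide using kb1 ka
    by (simp add: divide_simps)
  have u2: "norm u2 \<le> s" unfolding u2_def s_def norm_divide using kb2 ka
    by (simp add: divide_simps)
  have Qu1: "Q w1 = (norm \<alpha> ^ 2 - 1) * norm u1 ^ 2"
    unfolding Q_def u1_def by (simp add: norm_divide power_divide)
  have Qu2: "Q w2 = (norm \<alpha> ^ 2 - 1) * norm u2 ^ 2"
    unfolding Q_def u2_def by (simp add: norm_divide power_divide)
  have aa: "0 \<le> norm \<alpha> ^ 2 - 1" using na by (simp add: one_le_power)
  have Q2nn: "0 \<le> Q w2" using Qu2 aa by simp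
  have Q1nn: "0 \<le> Q w1" using Qu1 aa by simp
  have Q2b: "Q w2 \<le> 1 / \<kappa>^2"
  proof -
    have "Q w2 \<le> norm \<alpha> ^ 2 * s^2" unfolding Qu2
      using u2 aa by (intro mult_mono power_mono) auto
    also have "\<dots> = 1/\<kappa>^2" unfolding s_def using na \<kappa> by (auto simp: field_simps)
    finally show ?thesis .
  qed
  have udiff: "u1 - u2 = (w2 - w1) * u1 * u2"
    unfolding u1_def u2_def using ne1 ne2 by (simp add: field_simps)
  have ud: "norm (u1 - u2) \<le> norm (w1 - w2) * s^2"
  proof -
    have "norm (u1 - u2) = norm (w1 - w2) * (norm u1 * norm u2)"
      unfolding udiff by (simp add: norm_mult norm_minus_commute)
    also have "\<dots> \<le> norm (w1 - w2) * (s * s)"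
      using u1 u2 s by (intro mult_left_mono mult_mono) auto
    finally show ?thesis by (simp add: power2_eq_square)
  qed
  have Qd: "\<bar>Q w1 - Q w2\<bar> \<le> 2 * norm (w1 - w2) / \<kappa>^3"
  proof -
    have "Q w1 - Q w2 = (norm \<alpha> ^ 2 - 1) * ((norm u1 - norm u2) * (norm u1 + norm u2))"
      unfolding Qu1 Qu2 by (simp add: power2_eq_square algebra_simps)
    then have "\<bar>Q w1 - Q w2\<bar> = (norm \<alpha> ^ 2 - 1) * (\<bar>norm u1 - norm u2\<bar> * (norm u1 + norm u2))"
      using aa by (simp add: abs_mult)
    also have "\<dots> \<le> norm \<alpha> ^ 2 * (norm (w1 - w2) * s^2 * (2 * s))"
    proof (intro mult_mono)
      show "\<bar>norm u1 - norm u2\<bar> \<le> norm (w1 - w2) * s^2"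
        using norm_triangle_ineq3[of u1 u2] ud by linarith
      show "norm u1 + norm u2 \<le> 2 * s" using u1 u2 by simp
    qed (use aa in auto)
    also have "\<dots> = 2 * norm (w1 - w2) / (\<kappa>^3 * norm \<alpha>)"
      unfolding s_def using na \<kappa> by (simp add: field_simps power2_eq_square power3_eq_cube)
    also have "\<dots> \<le> 2 * norm (w1 - w2) / \<kappa>^3"
      using na \<kappa> mult_left_mono[OF na, of "norm (w1 - w2)"] by (simp add: divide_simps)
    finally show ?thesis .
  qed
  define X where "X = 1 + (norm w1 ^ 2 - 1) * Q w1"
  define Y where "Y = 1 + (norm w2 ^ 2 - 1) * Q w2"
  have n1: "0 \<le> norm w1 ^ 2 - 1" and n2: "0 \<le> norm w2 ^ 2 - 1" using w1 w2 by (simp_all add: one_le_power)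
  have X1: "1 \<le> X" unfolding X_def using n1 Q1nn by simp
  have Y1: "1 \<le> Y" unfolding Y_def using n2 Q2nn by simp
  define H where "H = norm (blaschke (Some \<alpha>) w1 / blaschke (Some \<alpha>) w2)"
  have B1: "norm (blaschke (Some \<alpha>) w1) ^ 2 = X" unfolding X_def Q_def blaschke_def using bl_sq[OF ne1] by simp
  have B2: "norm (blaschke (Some \<alpha>) w2) ^ 2 = Y" unfolding Y_def Q_def blaschke_def using bl_sq[OF ne2] by simp
  have H2: "H ^ 2 = X / Y" unfolding H_def norm_divide power_divide B1 B2 ..
  have Hpos: "0 < H"
  proof -
    have "H ^ 2 > 0" using H2 X1 Y1 by simp
    moreover have "H \<ge> 0" unfolding H_def by simp
    ultimately show ?thesis by (metis less_eq_real_def power_zero_numeral zero_less_numeral zero_power2 not_less)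
  qed
  have "ln H = ln (H^2) / 2" using Hpos by (simp add: ln_realpow)
  also have "\<dots> \<le> (X / Y - 1) / 2" using ln_le_minus_one[of "X/Y"] X1 Y1 H2 by simp
  also have "\<dots> \<le> max 0 (X - Y)"
  proof -
    have "X / Y - 1 = (X - Y) / Y" using Y1 by (simp add: field_simps)
    also have "\<dots> \<le> max 0 (X - Y)"
    proof (cases "X - Y \<ge> 0")
      case True
      then show ?thesis using Y1 mult_left_mono[OF Y1, of "X - Y"] by (simp add: divide_simps)
    next
      case False
      then show ?thesis using Y1 by (simp add: divide_nonpos_pos)
    qed
    finally have "X / Y - 1 \<le> max 0 (X - Y)" .
    moreover have "0 \<le> max 0 (X - Y)" by simp
    moreover have half_le: "\<And>a m::real. a \<le> m \<Longrightarrow> 0 \<le> m \<Longrightarrow> a/2 \<le> m" by linarith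
    ultimately show ?thesis by blast
  qed
  also have "\<dots> \<le> (norm w1^2 - 1) * (2*norm (w1-w2)/\<kappa>^3) + max 0 (norm w1^2 - norm w2^2) / \<kappa>^2"
  proof -
    have XY: "X - Y = (norm w1^2 - 1) * (Q w1 - Q w2) + (norm w1^2 - norm w2^2) * Q w2"
      unfolding X_def Y_def by (simp add: algebra_simps)
    have t1: "(norm w1^2 - 1) * (Q w1 - Q w2) \<le> (norm w1^2 - 1) * (2*norm (w1-w2)/\<kappa>^3)"
      using Qd n1 by (intro mult_left_mono) auto
    have t2: "(norm w1^2 - norm w2^2) * Q w2 \<le> max 0 (norm w1^2 - norm w2^2) / \<kappa>^2"
    proof -
      have "(norm w1^2 - norm w2^2) * Q w2 \<le> max 0 (norm w1^2 - norm w2^2) * Q w2"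
        using Q2nn by (intro mult_right_mono) auto
      also have "\<dots> \<le> max 0 (norm w1^2 - norm w2^2) * (1/\<kappa>^2)"
        using Q2b by (intro mult_left_mono) auto
      finally show ?thesis by simp
    qed
    have "0 \<le> (norm w1^2 - 1) * (2*norm (w1-w2)/\<kappa>^3)" using n1 \<kappa> by simp
    moreover have "0 \<le> max 0 (norm w1^2 - norm w2^2) / \<kappa>^2" by simp
    ultimately show ?thesis using XY t1 t2 by linarith
  qed
  finally show ?thesis unfolding H_def \<kappa>_def .
qed

lemma combine_none:
  fixes w \<xi> :: complex
  assumes C1: "0 < C1" and \<xi>: "1 \<le> norm \<xi>" and w: "1 \<le> norm w" "norm w \<le> norm \<xi> + C1*(norm \<xi> - 1)*norm(\<xi>-1)"
  shows "ln (norm (blaschke None w / blaschke None \<xi>)) \<le> C1*(norm \<xi> - 1)*norm(\<xi>-1)"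
proof -
  have "ln (norm (blaschke None w / blaschke None \<xi>)) = ln (norm w / norm \<xi>)"
    by (simp add: blaschke_def norm_divide)
  also have "\<dots> \<le> norm w / norm \<xi> - 1" using w \<xi> by (intro ln_le_minus_one divide_pos_pos) auto
  also have "\<dots> = (norm w - norm \<xi>) / norm \<xi>"
  proof -
    have "norm \<xi> \<noteq> 0" using \<xi> by linarith
    then show ?thesis by (simp add: diff_divide_distrib)
  qed
  also have "\<dots> \<le> C1*(norm \<xi> - 1)*norm(\<xi>-1)"
  proof (cases "norm w - norm \<xi> \<ge> 0")
    case True
    have "(norm w - norm \<xi>) / norm \<xi> \<le> norm w - norm \<xi>"
      using True \<xi> mult_left_mono[OF \<xi>, of "norm w - norm \<xi>"] by (simp add: divide_simps)
    then show ?thesis using w by linarith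
  next
    case False
    then have "(norm w - norm \<xi>) / norm \<xi> \<le> 0" using \<xi> by (intro divide_nonpos_pos) auto
    also have "0 \<le> C1*(norm \<xi> - 1)*norm(\<xi>-1)" using C1 \<xi> by simp
    finally show ?thesis .
  qed
  finally show ?thesis .
qed

lemma combine_some:
  fixes w \<xi> \<alpha> :: complex
  assumes d: "0<d" "d \<le> 1" and \<alpha>: "1+d \<le> norm \<alpha>" and C1: "0 < C1" and L2: "0 < L2"
    and \<xi>: "1 \<le> norm \<xi>" "norm \<xi> \<le> 1 + d/(2*(1+3*C1))"
    and w: "1 \<le> norm w" "norm w \<le> norm \<xi> + C1*(norm \<xi> - 1)*norm(\<xi>-1)" "norm (w-1) \<le> L2*norm(\<xi>-1)"
  shows "ln (norm (blaschke (Some \<alpha>) w / blaschke (Some \<alpha>) \<xi>)) \<le>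
    (6*(1+3*C1)*(L2+1)/(d/(2*(1+d)))^3 + 4*C1/(d/(2*(1+d)))^2) * (norm \<xi> - 1) * norm (\<xi> - 1)"
proof -
  define \<kappa> where "\<kappa> = d/(2*(1+d))"
  have \<kappa>: "0 < \<kappa>" using d by (simp add: \<kappa>_def)
  define t where "t = norm \<xi> - 1"
  define e where "e = norm (\<xi> - 1)"
  have t0: "0 \<le> t" using \<xi> by (simp add: t_def)
  have te: "t \<le> e" using norm_triangle_ineq2[of \<xi> 1] by (simp add: t_def e_def)
  have c3: "0 < 1 + 3*C1" using C1 by simp
  have dd: "d/(2*(1+3*C1)) \<le> d/2" using d c3 C1 by (intro divide_left_mono) auto
  have tb: "t * (1 + 3*C1) \<le> d/2"
  proof -
    have "t \<le> d/(2*(1+3*C1))" using \<xi> by (simp add: t_def)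
    then show ?thesis using c3 by (simp add: field_simps)
  qed
  have xi2: "norm \<xi> \<le> 1 + d/2" using \<xi> dd by linarith
  have e3: "e \<le> 3"
  proof -
    have "e \<le> norm \<xi> + 1" using norm_triangle_ineq4[of \<xi> 1] by (simp add: e_def)
    then show ?thesis using xi2 d by linarith
  qed
  have wt: "norm w \<le> 1 + t * (1 + 3*C1)"
  proof -
    have "C1 * t * e \<le> C1 * t * 3" using e3 C1 t0 by (intro mult_left_mono) auto
    moreover have "norm \<xi> = 1 + t" by (simp add: t_def)
    ultimately show ?thesis using w(2) unfolding t_def[symmetric] e_def[symmetric] by (simp add: algebra_simps)
  qed
  have w2: "norm w \<le> 1 + d/2" using wt tb by linarith
  have bl: "ln (norm (blaschke (Some \<alpha>) w / blaschke (Some \<alpha>) \<xi>)) \<le>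
     (norm w^2 - 1) * (2*norm (w-\<xi>)/\<kappa>^3) + max 0 (norm w^2 - norm \<xi>^2) / \<kappa>^2"
    unfolding \<kappa>_def using bl_est[OF d(1) \<alpha> w(1) w2 \<xi>(1) xi2] .
  have A: "norm w^2 - 1 \<le> 3 * (1 + 3*C1) * t"
  proof -
    have "norm w^2 - 1 = (norm w - 1) * (norm w + 1)" by (simp add: algebra_simps power2_eq_square)
    also have "\<dots> \<le> (t * (1 + 3*C1)) * 3" using wt w2 w(1) d by (intro mult_mono) auto
    finally show ?thesis by (simp add: algebra_simps)
  qed
  have B: "norm (w - \<xi>) \<le> (L2 + 1) * e"
  proof -
    have "norm (w - \<xi>) \<le> norm (w - 1) + norm (1 - \<xi>)" using norm_triangle_ineq[of "w - 1" "1 - \<xi>"] by simp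
    then show ?thesis using w(3) by (simp add: e_def norm_minus_commute algebra_simps)
  qed
  have n1: "0 \<le> norm w^2 - 1" using w(1) by (simp add: one_le_power)
  have T1: "(norm w^2 - 1) * (2*norm (w-\<xi>)/\<kappa>^3) \<le> (3 * (1 + 3*C1) * t) * (2*((L2 + 1) * e)/\<kappa>^3)"
    using A B n1 \<kappa> t0 C1 by (intro mult_mono divide_right_mono mult_left_mono) auto
  have T2: "max 0 (norm w^2 - norm \<xi>^2) \<le> 4 * C1 * t * e"
  proof (cases "norm w \<le> norm \<xi>")
    case True
    then have "norm w^2 \<le> norm \<xi>^2" by (simp add: power_mono)
    then show ?thesis using C1 t0 te by simp
  next
    case False
    have "norm w^2 - norm \<xi>^2 = (norm w - norm \<xi>) * (norm w + norm \<xi>)" by (simp add: algebra_simps power2_eq_square)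
    also have "\<dots> \<le> (C1 * t * e) * 4" using False w(2) w2 xi2 d
      unfolding t_def[symmetric] e_def[symmetric] by (intro mult_mono) (auto simp: algebra_simps)
    finally show ?thesis using C1 t0 te by (simp add: algebra_simps)
  qed
  have T2': "max 0 (norm w^2 - norm \<xi>^2) / \<kappa>^2 \<le> (4 * C1 * t * e) / \<kappa>^2"
    using T2 \<kappa> by (simp add: divide_right_mono)
  have "ln (norm (blaschke (Some \<alpha>) w / blaschke (Some \<alpha>) \<xi>)) \<le>
        (3 * (1 + 3*C1) * t) * (2*((L2 + 1) * e)/\<kappa>^3) + (4 * C1 * t * e) / \<kappa>^2"
    using bl T1 T2' by linarith
  also have "\<dots> = (6*(1+3*C1)*(L2+1)/\<kappa>^3 + 4*C1/\<kappa>^2) * t * e"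
    by (simp add: field_simps)
  finally show ?thesis unfolding \<kappa>_def t_def e_def .
qed

lemma radial2: "\<xi> \<noteq> 0 \<Longrightarrow> norm (\<xi> / of_real (norm \<xi>)) = 1 \<and> norm (\<xi> - \<xi> / of_real (norm \<xi>)) = \<bar>norm \<xi> - 1\<bar>"
  for \<xi> :: complex
proof -
  assume "\<xi> \<noteq> 0"
  then have nz: "norm \<xi> > 0" by simp
  have "\<xi> - \<xi> / of_real (norm \<xi>) = of_real (norm \<xi> - 1) * (\<xi> / of_real (norm \<xi>))"
    using nz by (simp add: field_simps)
  moreover have "norm (\<xi> / of_real (norm \<xi>)) = 1" using nz by (simp add: norm_divide)
  ultimately show ?thesis by (metis norm_mult norm_of_real mult.right_neutral)
qed

lemma K_dist:
  assumes Kc: "rs_closed K" and Ks: "K \<subseteq> Dstar"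
  shows "\<exists>d. 0 < d \<and> d \<le> 1 \<and> (\<forall>z. Some z \<in> K \<longrightarrow> 1 + d \<le> norm z)"
proof -
  define S where "S = {z. Some z \<in> K}"
  have cS: "closed S" using Kc by (simp add: rs_closed_def S_def)
  have gt: "norm z > 1" if "z \<in> S" for z
    using that Ks by (auto simp: S_def ext_disc_def)
  show ?thesis
  proof (cases "S = {}")
    case True
    then show ?thesis by (intro exI[of _ 1]) (auto simp: S_def)
  next
    case False
    have dj: "cball 0 1 \<inter> S = {}" using gt by force
    have "setdist (cball (0::complex) 1) S \<noteq> 0"
      using setdist_eq_0_compact_closed[of "cball (0::complex) 1" S] cS False dj by auto
    then have sp: "setdist (cball (0::complex) 1) S > 0" using setdist_pos_le by (metis less_eq_real_def)
    define d where "d = min 1 (setdist (cball (0::complex) 1) S)"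
    have "1 + d \<le> norm z" if "Some z \<in> K" for z
    proof -
      have zS: "z \<in> S" using that by (simp add: S_def)
      then have z1: "norm z > 1" using gt by blast
      then have nz: "z \<noteq> 0" by auto
      have "z / of_real (norm z) \<in> cball 0 1" using radial2[OF nz] by simp
      then have "setdist (cball 0 1) S \<le> dist (z / of_real (norm z)) z" using zS setdist_le_dist by blast
      also have "\<dots> = norm z - 1" using radial2[OF nz] z1 by (simp add: dist_norm norm_minus_commute)
      finally show ?thesis unfolding d_def by linarith
    qed
    then show ?thesis using sp by (intro exI[of _ d]) (auto simp: d_def)
  qed
qed

theorem mainTheorem8:
  fixes \<Gamma> :: "complex set" and u0 :: complex
    and \<Phi>1 :: "complex \<Rightarrow> complex" and \<Phi>2 :: "riem \<Rightarrow> riem"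
    and R \<rho> :: real and F :: "complex \<Rightarrow> complex" and K :: "riem set"
  assumes jordan: "analytic_jordan_curve \<Gamma>"
    and u0: "u0 \<in> \<Gamma>"
    and R: "R > 1"
    and \<Phi>1_holo: "\<Phi>1 holomorphic_on ball 0 R"
    and \<Phi>1_inj: "inj_on \<Phi>1 (ball 0 R)"
    and \<Phi>1_onto: "\<Phi>1 ` ball 0 1 = inside \<Gamma>"
    and \<rho>: "0 < \<rho>" "\<rho> < 1"
    and \<Phi>2_an: "rs_analytic_on \<Phi>2 (ext_disc \<rho>)"
    and \<Phi>2_inj: "inj_on \<Phi>2 (ext_disc \<rho>)"
    and \<Phi>2_onto: "\<Phi>2 ` Dstar = insert None (Some ` outside \<Gamma>)"
    and \<Phi>1_1: "\<Phi>1 1 = u0"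
    and \<Phi>2_1: "\<Phi>2 (Some 1) = Some u0"
    and \<Phi>1_d: "norm (deriv \<Phi>1 1) = 1"
    and \<Phi>2_d: "norm (deriv (\<lambda>v. the (\<Phi>2 (Some v))) 1) = 1"
    and F_def: "F = (\<lambda>\<xi>. the (inv_into (ext_disc \<rho>) \<Phi>2 (Some (\<Phi>1 \<xi>))))"
    and K_sub: "K \<subseteq> Dstar"
    and K_closed: "rs_closed K"
  shows "\<exists>\<delta>>0. \<exists>C>0. \<forall>a\<in>K. \<forall>\<xi>. 1 \<le> norm \<xi> \<and> norm \<xi> \<le> 1 + \<delta> \<longrightarrow>
           ln (norm (blaschke a (F \<xi>) / blaschke a \<xi>)) \<le> C * (norm \<xi> - 1) * norm (\<xi> - 1)"
proof -
  obtain \<psi> r1 r2 where \<psi>: "r1 < 1" "1 < r2" "\<psi> holomorphic_on {z. r1 < norm z \<and> norm z < r2}"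
     "inj_on \<psi> {z. r1 < norm z \<and> norm z < r2}" "\<Gamma> = \<psi> ` sphere 0 1"
    using jordan unfolding analytic_jordan_curve_def by blast
  define c where "c = \<psi> \<circ> circlepath 0 1"
  have sph_sub: "sphere 0 1 \<subseteq> {z. r1 < norm z \<and> norm z < r2}" using \<psi> by auto
  have pic: "path_image (circlepath 0 1) = sphere (0::complex) 1" by (simp add: path_image_circlepath)
  have sp: "simple_path c" unfolding c_def
  proof (rule simple_path_continuous_image)
    show "simple_path (circlepath (0::complex) 1)" by (simp add: simple_path_circlepath)
    show "continuous_on (path_image (circlepath 0 1)) \<psi>" unfolding pic
      using \<psi>(3) sph_sub holomorphic_on_imp_continuous_on continuous_on_subset by blast
    show "inj_on \<psi> (path_image (circlepath 0 1))" unfolding pic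
      using \<psi>(4) sph_sub inj_on_subset by blast
  qed
  have cl: "pathfinish c = pathstart c" unfolding c_def
    by (simp add: pathfinish_compose pathstart_compose)
  have \<Gamma>c: "path_image c = \<Gamma>" unfolding c_def path_image_compose pic \<psi>(5) ..
  note JO = Jordan_inside_outside[OF sp cl, unfolded \<Gamma>c]
  have opin: "open (inside \<Gamma>)" and opout: "open (outside \<Gamma>)"
    and frin: "frontier (inside \<Gamma>) = \<Gamma>" and frout: "frontier (outside \<Gamma>) = \<Gamma>"
    using JO by auto
  have \<Gamma>out: "z \<notin> outside \<Gamma>" if "z \<in> \<Gamma>" for z
    using that outside_no_overlap[of \<Gamma>] by blast
  have compl: "inside \<Gamma> \<union> outside \<Gamma> = - \<Gamma>" by simp
  have inj1: "\<And>x y. \<Phi>1 x = \<Phi>1 y \<Longrightarrow> x \<in> ball 0 R \<Longrightarrow> y \<in> ball 0 R \<Longrightarrow> x = y"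
    using \<Phi>1_inj unfolding inj_on_def by blast
  have cR: "cball 0 1 \<subseteq> ball (0::complex) R" using R by auto
  have contPhi1: "continuous_on (ball 0 R) \<Phi>1" using \<Phi>1_holo holomorphic_on_imp_continuous_on by blast
  have cc: "continuous_on (cball 0 1) \<Phi>1" using continuous_on_subset[OF contPhi1 cR] .
  have S1: "\<Gamma> \<subseteq> \<Phi>1 ` cball 0 1"
  proof -
    have "closed (\<Phi>1 ` cball 0 1)" by (intro compact_imp_closed compact_continuous_image cc) simp
    moreover have "inside \<Gamma> \<subseteq> \<Phi>1 ` cball 0 1" unfolding \<Phi>1_onto[symmetric] by (rule image_mono) auto
    ultimately have "closure (inside \<Gamma>) \<subseteq> \<Phi>1 ` cball 0 1" by (simp add: closure_minimal)
    then show ?thesis using frin by (metis Diff_subset frontier_def order_trans)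
  qed
  have notin: "\<Phi>1 \<zeta> \<notin> inside \<Gamma>" if "\<zeta> \<in> ball 0 R" "norm \<zeta> \<ge> 1" for \<zeta>
  proof
    assume "\<Phi>1 \<zeta> \<in> inside \<Gamma>"
    then obtain \<eta> where \<eta>: "\<eta> \<in> ball 0 1" "\<Phi>1 \<zeta> = \<Phi>1 \<eta>" using \<Phi>1_onto by (metis imageE)
    then have "\<zeta> = \<eta>" using inj1[of \<zeta> \<eta>] that R \<eta>(1) by auto
    then show False using \<eta> that by simp
  qed
  have S2: "\<Phi>1 \<zeta> \<in> \<Gamma>" if "norm \<zeta> = 1" for \<zeta>
  proof -
    have "\<Phi>1 ` closure (ball 0 1) \<subseteq> closure (inside \<Gamma>)"
      by (rule image_closure_subset) (use cc \<Phi>1_onto closure_subset in auto)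
    then have a: "\<Phi>1 \<zeta> \<in> closure (inside \<Gamma>)" using that by auto
    have b: "\<Phi>1 \<zeta> \<notin> inside \<Gamma>" using notin[of \<zeta>] that R by auto
    show ?thesis using a b frin opin by (metis DiffI frontier_def interior_open)
  qed
  have S3: "\<Phi>1 \<xi> \<in> outside \<Gamma>" if "1 < norm \<xi>" "norm \<xi> < R" for \<xi>
  proof -
    have "\<Phi>1 \<xi> \<notin> inside \<Gamma>" using notin[of \<xi>] that by auto
    moreover have "\<Phi>1 \<xi> \<notin> \<Gamma>"
    proof
      assume "\<Phi>1 \<xi> \<in> \<Gamma>"
      then obtain \<eta> where \<eta>: "\<eta> \<in> cball 0 1" "\<Phi>1 \<xi> = \<Phi>1 \<eta>" using S1 by blast
      then have "\<xi> = \<eta>" using inj1[of \<xi> \<eta>] that R cR \<eta>(1) by auto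
      then show False using \<eta> that by simp
    qed
    ultimately show ?thesis using compl by blast
  qed
  have Dsub: "Dstar \<subseteq> ext_disc \<rho>" using \<rho> by (auto simp: ext_disc_def)
  have injD: "\<And>x y. \<Phi>2 x = \<Phi>2 y \<Longrightarrow> x \<in> ext_disc \<rho> \<Longrightarrow> y \<in> ext_disc \<rho> \<Longrightarrow> x = y"
    using \<Phi>2_inj unfolding inj_on_def by blast
  have Some_ext: "Some v \<in> ext_disc \<rho>" if "\<rho> < norm v" for v using that by (simp add: ext_disc_def)
  have noD: "\<Phi>2 x \<noteq> Some z" if "x \<in> Dstar" "z \<in> \<Gamma>" for x z
  proof
    assume "\<Phi>2 x = Some z"
    then have "Some z \<in> \<Phi>2 ` Dstar" using that by force
    then have "z \<in> outside \<Gamma>" using \<Phi>2_onto by auto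
    then show False using \<Gamma>out that by blast
  qed
  obtain x0 where x0: "x0 \<in> Dstar" "\<Phi>2 x0 = None"
    using \<Phi>2_onto by (metis imageE insertI1)
  obtain r2' where r2': "1 < r2'" "\<And>v. \<rho> < norm v \<Longrightarrow> norm v < r2' \<Longrightarrow> \<Phi>2 (Some v) \<noteq> None"
  proof (cases x0)
    case None
    show ?thesis
    proof (rule that[of 2])
      fix v :: complex assume v: "\<rho> < norm v" "norm v < 2"
      show "\<Phi>2 (Some v) \<noteq> None"
      proof
        assume "\<Phi>2 (Some v) = None"
        then have "Some v = x0" using injD[of "Some v" x0] x0 Dsub Some_ext[OF v(1)] by auto
        then show False using None by simp
      qed
    qed simp
  next
    case (Some q)
    have q: "norm q > 1" using x0(1) Some by (auto simp: ext_disc_def)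
    show ?thesis
    proof (rule that[of "norm q"])
      fix v :: complex assume v: "\<rho> < norm v" "norm v < norm q"
      show "\<Phi>2 (Some v) \<noteq> None"
      proof
        assume "\<Phi>2 (Some v) = None"
        then have "Some v = x0" using injD[of "Some v" x0] x0 Dsub Some_ext[OF v(1)] by auto
        then show False using Some v by simp
      qed
    qed (use q in simp)
  qed
  define A2 where "A2 = ball (0::complex) r2' - cball 0 \<rho>"
  have A2_iff: "v \<in> A2 \<longleftrightarrow> \<rho> < norm v \<and> norm v < r2'" for v by (auto simp: A2_def)
  have openA2: "open A2" unfolding A2_def by auto
  define \<Phi>2c where "\<Phi>2c = (\<lambda>v. the (\<Phi>2 (Some v)))"
  have fin: "\<Phi>2 (Some v) = Some (\<Phi>2c v)" if "v \<in> A2" for v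
    using r2'(2)[of v] that by (auto simp: A2_iff \<Phi>2c_def)
  have A2ext: "Some v \<in> ext_disc \<rho>" if "v \<in> A2" for v using that Some_ext by (auto simp: A2_iff)
  have injA2: "inj_on \<Phi>2c A2"
  proof (rule inj_onI)
    fix v w assume "v \<in> A2" "w \<in> A2" "\<Phi>2c v = \<Phi>2c w"
    then have "\<Phi>2 (Some v) = \<Phi>2 (Some w)" using fin by metis
    then show "v = w" using injD[of "Some v" "Some w"] A2ext \<open>v \<in> A2\<close> \<open>w \<in> A2\<close> by auto
  qed
  have H2: "\<Phi>2c holomorphic_on A2"
    unfolding holomorphic_on_open[OF openA2]
  proof
    fix p assume pA: "p \<in> A2"
    have "rs_analytic_at \<Phi>2 (Some p)" using \<Phi>2_an A2ext[OF pA] by (simp add: rs_analytic_on_def)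
    then obtain e where e: "e > 0" and alt:
      "((\<forall>w\<in>ball 0 e. rs_chart_loc \<Phi>2 (Some p) w \<noteq> None) \<and>
         (\<lambda>w. the (rs_chart_loc \<Phi>2 (Some p) w)) holomorphic_on ball 0 e)
      \<or> ((\<forall>w\<in>ball 0 e. rs_chart_loc \<Phi>2 (Some p) w \<noteq> Some 0) \<and>
         (\<lambda>w. the (rs_inv (rs_chart_loc \<Phi>2 (Some p) w))) holomorphic_on ball 0 e)"
      unfolding rs_analytic_at_def by blast
    have ch: "rs_chart_loc \<Phi>2 (Some p) (v - p) = \<Phi>2 (Some v)" for v by (simp add: rs_chart_loc_def)
    have im: "(\<lambda>v. v - p) ` ball p e \<subseteq> ball 0 e" by (auto simp: dist_norm norm_minus_commute)
    have hm: "(\<lambda>v. v - p) holomorphic_on ball p e" by (intro holomorphic_intros)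
    show "\<exists>f'. (\<Phi>2c has_field_derivative f') (at p)"
    proof (cases "(\<lambda>w. the (rs_chart_loc \<Phi>2 (Some p) w)) holomorphic_on ball 0 e")
      case True
      have "((\<lambda>w. the (rs_chart_loc \<Phi>2 (Some p) w)) \<circ> (\<lambda>v. v - p)) holomorphic_on ball p e"
        by (rule holomorphic_on_compose_gen[OF hm True im])
      moreover have "((\<lambda>w. the (rs_chart_loc \<Phi>2 (Some p) w)) \<circ> (\<lambda>v. v - p)) = \<Phi>2c"
        by (auto simp: \<Phi>2c_def ch)
      ultimately have "\<Phi>2c holomorphic_on ball p e" by simp
      then show ?thesis using e holomorphic_derivI[of \<Phi>2c "ball p e" p UNIV] by auto
    next
      case False
      with alt have A: "\<forall>w\<in>ball 0 e. rs_chart_loc \<Phi>2 (Some p) w \<noteq> Some 0"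
        and H: "(\<lambda>w. the (rs_inv (rs_chart_loc \<Phi>2 (Some p) w))) holomorphic_on ball 0 e" by auto
      define h where "h = (\<lambda>w. the (rs_inv (rs_chart_loc \<Phi>2 (Some p) w)))"
      define S where "S = ball p e \<inter> A2"
      have oS: "open S" "p \<in> S" using openA2 pA e by (auto simp: S_def)
      have eq: "h (v - p) \<noteq> 0 \<and> \<Phi>2c v = 1 / h (v - p)" if "v \<in> S" for v
      proof -
        have vA: "v \<in> A2" and vb: "v - p \<in> ball 0 e" using that by (auto simp: S_def dist_norm norm_minus_commute)
        have "\<Phi>2c v \<noteq> 0" using A vb fin[OF vA] ch[of v] by metis
        then show ?thesis using fin[OF vA] by (simp add: h_def ch rs_inv_def)
      qed
      have "(h \<circ> (\<lambda>v. v - p)) holomorphic_on ball p e"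
        unfolding h_def by (rule holomorphic_on_compose_gen[OF hm H im])
      then have "(h \<circ> (\<lambda>v. v - p)) holomorphic_on S" by (rule holomorphic_on_subset) (auto simp: S_def)
      then have "(\<lambda>v. 1 / h (v - p)) holomorphic_on S"
        using eq by (intro holomorphic_on_divide holomorphic_intros) (auto simp: o_def)
      then obtain f' where "((\<lambda>v. 1 / h (v - p)) has_field_derivative f') (at p)"
        using holomorphic_derivI[of _ S p UNIV] oS by auto
      then have "(\<Phi>2c has_field_derivative f') (at p)"
        by (rule has_field_derivative_transform_within_open[OF _ oS]) (use eq in auto)
      then show ?thesis by blast
    qed
  qed
  have T1: "\<exists>v. norm v = 1 \<and> \<Phi>2 (Some v) = Some z" if zG: "z \<in> \<Gamma>" for z
  proof -
    have "z \<in> closure (outside \<Gamma>)" using zG frout by (metis DiffD1 frontier_def)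
    then obtain w where w: "\<And>n. w n \<in> outside \<Gamma>" "(w \<longlongrightarrow> z) sequentially"
      using closure_sequential by metis
    have "\<forall>n. \<exists>x. x \<in> Dstar \<and> \<Phi>2 x = Some (w n)"
    proof
      fix n
      have "Some (w n) \<in> \<Phi>2 ` Dstar" using w(1)[of n] \<Phi>2_onto by auto
      then show "\<exists>x. x \<in> Dstar \<and> \<Phi>2 x = Some (w n)" by force
    qed
    then obtain x where x: "\<And>n. x n \<in> Dstar" "\<And>n. \<Phi>2 (x n) = Some (w n)" by metis
    define y where "y = (\<lambda>n. case x n of None \<Rightarrow> 0 | Some v \<Rightarrow> 1 / v)"
    have yin: "y n \<in> cball 0 1" for n
    proof (cases "x n")
      case None then show ?thesis by (simp add: y_def)
    next
      case (Some v)
      then have "norm v > 1" using x(1)[of n] by (auto simp: ext_disc_def)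
      then show ?thesis using Some by (simp add: y_def norm_divide divide_simps)
    qed
    have xy: "rs_inv (Some (y n)) = x n" for n
    proof (cases "x n")
      case None then show ?thesis by (simp add: y_def rs_inv_def)
    next
      case (Some v)
      then have "norm v > 1" using x(1)[of n] by (auto simp: ext_disc_def)
      then have "v \<noteq> 0" by auto
      then show ?thesis using Some by (simp add: y_def rs_inv_def)
    qed
    obtain l r where l: "l \<in> cball 0 1" "strict_mono r" "((y \<circ> r) \<longlongrightarrow> l) sequentially"
      using compact_imp_seq_compact[OF compact_cball[of "0::complex" 1]] yin unfolding seq_compact_def by metis
    have wr: "((w \<circ> r) \<longlongrightarrow> z) sequentially" using LIMSEQ_subseq_LIMSEQ[OF w(2) l(2)] .
    show ?thesis
    proof (cases "l = 0")
      case True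
      have an: "rs_analytic_at \<Phi>2 None" using \<Phi>2_an by (simp add: rs_analytic_on_def ext_disc_def)
      have "\<Phi>2 None = Some z"
      proof (rule chart_lim[OF an _ _ wr])
        show "((y \<circ> r) \<longlongrightarrow> 0) sequentially" using l(3) True by simp
        show "\<forall>\<^sub>F n in sequentially. rs_chart_loc \<Phi>2 None ((y \<circ> r) n) = Some ((w \<circ> r) n)"
          by (intro always_eventually allI) (simp add: rs_chart_loc_def xy x(2))
      qed
      then show ?thesis using noD[OF _ zG, of None] by (simp add: ext_disc_def)
    next
      case False
      define v where "v = 1 / l"
      have nl: "norm l \<le> 1" using l(1) by simp
      have nv: "norm v \<ge> 1" using nl False by (simp add: v_def norm_divide divide_simps)
      have an: "rs_analytic_at \<Phi>2 (Some v)" using \<Phi>2_an nv \<rho> by (auto simp: rs_analytic_on_def ext_disc_def)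
      have ev: "eventually (\<lambda>n. y (r n) \<noteq> 0) sequentially"
        using tendsto_imp_eventually_ne[OF l(3) False] by (simp add: o_def)
      have t: "((\<lambda>n. 1 / y (r n) - v) \<longlongrightarrow> 0) sequentially"
      proof -
        have "((\<lambda>n. 1 / y (r n)) \<longlongrightarrow> 1 / l) sequentially"
          using l(3) False by (intro tendsto_divide tendsto_const) (auto simp: o_def)
        then have "((\<lambda>n. 1 / y (r n) - v) \<longlongrightarrow> 1 / l - v) sequentially"
          by (intro tendsto_diff tendsto_const)
        then show ?thesis by (simp add: v_def)
      qed
      have "\<Phi>2 (Some v) = Some z"
      proof (rule chart_lim[OF an t _ wr])
        show "\<forall>\<^sub>F n in sequentially. rs_chart_loc \<Phi>2 (Some v) (1 / y (r n) - v) = Some ((w \<circ> r) n)"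
          using ev
        proof eventually_elim
          case (elim n)
          have "rs_chart_loc \<Phi>2 (Some v) (1 / y (r n) - v) = \<Phi>2 (Some (1 / y (r n)))"
            by (simp add: rs_chart_loc_def)
          also have "\<dots> = \<Phi>2 (rs_inv (Some (y (r n))))" using elim by (simp add: rs_inv_def)
          also have "\<dots> = Some ((w \<circ> r) n)" by (simp add: xy x(2))
          finally show ?case .
        qed
      qed
      moreover have "norm v \<le> 1"
      proof (rule ccontr)
        assume "\<not> norm v \<le> 1"
        then have "Some v \<in> Dstar" by (simp add: ext_disc_def)
        then show False using noD[OF _ zG] \<open>\<Phi>2 (Some v) = Some z\<close> by blast
      qed
      ultimately show ?thesis using nv by (intro exI[of _ v]) auto
    qed
  qed
  obtain g where g: "g holomorphic_on (\<Phi>2c ` A2)" "\<And>z. z \<in> A2 \<Longrightarrow> deriv \<Phi>2c z * deriv g (\<Phi>2c z) = 1"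
      "\<And>z. z \<in> A2 \<Longrightarrow> g (\<Phi>2c z) = z"
    using holomorphic_has_inverse[OF H2 openA2 injA2] by blast
  define \<Omega> where "\<Omega> = \<Phi>2c ` A2"
  have open\<Omega>: "open \<Omega>" unfolding \<Omega>_def by (rule open_mapping_thm3[OF H2 openA2 injA2])
  define U where "U = ball 0 R \<inter> \<Phi>1 -` \<Omega>"
  have openU: "open U" unfolding U_def by (rule continuous_open_preimage[OF contPhi1 open_ball open\<Omega>])
  have one_A2: "v \<in> A2" if "norm v = 1" for v using that \<rho> r2' by (simp add: A2_iff)
  have sphU: "\<zeta> \<in> U" if z1: "norm \<zeta> = 1" for \<zeta>
  proof -
    obtain v where v: "norm v = 1" "\<Phi>2 (Some v) = Some (\<Phi>1 \<zeta>)" using T1[OF S2[OF z1]] by blast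
    have "\<Phi>2c v = \<Phi>1 \<zeta>" using v(2) by (simp add: \<Phi>2c_def)
    then have "\<Phi>1 \<zeta> \<in> \<Omega>" using one_A2[OF v(1)] unfolding \<Omega>_def by force
    then show ?thesis using that R by (simp add: U_def)
  qed
  define Fh where "Fh = g \<circ> \<Phi>1"
  have HF: "Fh holomorphic_on U" unfolding Fh_def
  proof (rule holomorphic_on_compose_gen[of \<Phi>1 U g \<Omega>])
    show "\<Phi>1 holomorphic_on U" using \<Phi>1_holo by (rule holomorphic_on_subset) (auto simp: U_def)
    show "g holomorphic_on \<Omega>" using g(1) by (simp add: \<Omega>_def)
    show "\<Phi>1 ` U \<subseteq> \<Omega>" by (auto simp: U_def)
  qed
  have FU: "F \<xi> = Fh \<xi> \<and> Fh \<xi> \<in> A2 \<and> \<Phi>2 (Some (Fh \<xi>)) = Some (\<Phi>1 \<xi>)" if xU: "\<xi> \<in> U" for \<xi>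
  proof -
    obtain v where v: "v \<in> A2" "\<Phi>1 \<xi> = \<Phi>2c v" using xU by (auto simp: U_def \<Omega>_def)
    have Fv: "Fh \<xi> = v" using g(3)[OF v(1)] v(2) by (simp add: Fh_def)
    have P: "\<Phi>2 (Some v) = Some (\<Phi>1 \<xi>)" using fin[OF v(1)] v(2) by simp
    have "inv_into (ext_disc \<rho>) \<Phi>2 (Some (\<Phi>1 \<xi>)) = Some v"
      using inv_into_f_f[OF \<Phi>2_inj A2ext[OF v(1)]] P by simp
    then show ?thesis using Fv P v(1) by (simp add: F_def)
  qed
  have norm1: "norm (Fh \<zeta>) = 1" if z1: "norm \<zeta> = 1" for \<zeta>
  proof -
    obtain v where v: "norm v = 1" "\<Phi>2 (Some v) = Some (\<Phi>1 \<zeta>)" using T1[OF S2[OF z1]] by blast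
    have zU: "\<zeta> \<in> U" using sphU that .
    then have "\<Phi>2 (Some (Fh \<zeta>)) = \<Phi>2 (Some v)" using FU v by simp
    then have "Some (Fh \<zeta>) = Some v"
      using injD[of "Some (Fh \<zeta>)" "Some v"] A2ext FU[OF zU] one_A2[OF v(1)] by auto
    then show ?thesis using v by simp
  qed
  have normge: "1 \<le> norm (Fh \<xi>)" if "\<xi> \<in> U" "1 \<le> norm \<xi>" for \<xi>
  proof (cases "norm \<xi> = 1")
    case True then show ?thesis using norm1 by simp
  next
    case False
    then have "1 < norm \<xi>" "norm \<xi> < R" using that by (auto simp: U_def)
    then have "\<Phi>1 \<xi> \<in> outside \<Gamma>" by (rule S3)
    then have "Some (\<Phi>1 \<xi>) \<in> \<Phi>2 ` Dstar" using \<Phi>2_onto by auto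
    then obtain x where x: "x \<in> Dstar" "\<Phi>2 x = Some (\<Phi>1 \<xi>)" by force
    then have "\<Phi>2 x = \<Phi>2 (Some (Fh \<xi>))" using FU[OF that(1)] by simp
    then have "x = Some (Fh \<xi>)" using injD[of x "Some (Fh \<xi>)"] Dsub x(1) A2ext FU[OF that(1)] by auto
    then show ?thesis using x(1) by (auto simp: ext_disc_def)
  qed
  have \<Phi>2c1: "\<Phi>2c 1 = u0" using \<Phi>2_1 by (simp add: \<Phi>2c_def)
  have oneA: "(1::complex) \<in> A2" using one_A2 by simp
  have Fh1: "Fh 1 = 1" using g(3)[OF oneA] \<Phi>2c1 \<Phi>1_1 by (simp add: Fh_def)
  have dF1: "norm (deriv Fh 1) = 1"
  proof -
    have u0\<Omega>: "u0 \<in> \<Omega>" using oneA \<Phi>2c1 unfolding \<Omega>_def by force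
    have d1: "\<Phi>1 field_differentiable at 1" using \<Phi>1_holo R by (intro holomorphic_on_imp_differentiable_at) auto
    have d2: "g field_differentiable at (\<Phi>1 1)"
      using g(1) open\<Omega> u0\<Omega> \<Phi>1_1 unfolding \<Omega>_def by (intro holomorphic_on_imp_differentiable_at) auto
    have e1: "deriv Fh 1 = deriv g (\<Phi>1 1) * deriv \<Phi>1 1" unfolding Fh_def by (rule deriv_chain[OF d1 d2])
    have e2: "deriv \<Phi>2c 1 * deriv g u0 = 1" using g(2)[OF oneA] \<Phi>2c1 by simp
    have e3: "norm (deriv \<Phi>2c 1) = 1" using \<Phi>2_d by (simp add: \<Phi>2c_def)
    have "norm (deriv g u0) = 1" using arg_cong[OF e2, of norm] e3 by (simp add: norm_mult)
    then show ?thesis using e1 \<Phi>1_d \<Phi>1_1 by (simp add: norm_mult)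
  qed
  have nU: "-U \<noteq> {}"
  proof -
    have "complex_of_real R \<notin> U" using R by (simp add: U_def)
    then show ?thesis by blast
  qed
  have sU: "sphere 0 1 \<subseteq> U" using sphU by auto
  obtain \<epsilon> C1 L2 where \<epsilon>: "\<epsilon> > 0" "C1 > 0" "L2 > 0" and P: "\<And>\<xi>. 1 \<le> norm \<xi> \<and> norm \<xi> \<le> 1+\<epsilon> \<longrightarrow> \<xi> \<in> U \<and>
            norm (Fh \<xi>) \<le> norm \<xi> + C1*(norm \<xi> - 1)*norm(\<xi>-1) \<and> norm (Fh \<xi> - 1) \<le> L2 * norm (\<xi> - 1)"
    using F_est[OF HF openU sU nU norm1 Fh1 dF1] by blast
  obtain d where d: "0 < d" "d \<le> 1" "\<And>z. Some z \<in> K \<Longrightarrow> 1 + d \<le> norm z"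
    using K_dist[OF K_closed K_sub] by blast
  define \<delta> where "\<delta> = min \<epsilon> (d/(2*(1+3*C1)))"
  define K2 where "K2 = 6*(1+3*C1)*(L2+1)/(d/(2*(1+d)))^3 + 4*C1/(d/(2*(1+d)))^2"
  define C where "C = C1 + K2"
  have \<delta>: "\<delta> > 0" using \<epsilon> d by (simp add: \<delta>_def)
  have K2: "K2 \<ge> 0" using \<epsilon> d by (simp add: K2_def)
  have C: "C > 0" using K2 \<epsilon> by (simp add: C_def)
  have main: "ln (norm (blaschke a (F \<xi>) / blaschke a \<xi>)) \<le> C * (norm \<xi> - 1) * norm (\<xi> - 1)"
    if aK: "a \<in> K" and \<xi>: "1 \<le> norm \<xi>" "norm \<xi> \<le> 1 + \<delta>" for a \<xi>
  proof -
    have Pe: "\<xi> \<in> U \<and> norm (Fh \<xi>) \<le> norm \<xi> + C1*(norm \<xi> - 1)*norm(\<xi>-1) \<and> norm (Fh \<xi> - 1) \<le> L2 * norm (\<xi> - 1)"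
      using P[of \<xi>] \<xi> by (simp add: \<delta>_def)
    then have FF: "F \<xi> = Fh \<xi>" using FU by blast
    have ge: "1 \<le> norm (Fh \<xi>)" using normge Pe \<xi> by blast
    have te: "0 \<le> (norm \<xi> - 1) * norm (\<xi> - 1)" using \<xi> by simp
    show ?thesis
    proof (cases a)
      case None
      have "ln (norm (blaschke a (F \<xi>) / blaschke a \<xi>)) \<le> C1 * (norm \<xi> - 1) * norm (\<xi> - 1)"
        unfolding None FF using combine_none[OF \<epsilon>(2) \<xi>(1) ge] Pe by blast
      also have "\<dots> \<le> C * (norm \<xi> - 1) * norm (\<xi> - 1)"
        using mult_right_mono[of C1 C "(norm \<xi> - 1) * norm (\<xi> - 1)"] te K2 by (simp add: C_def mult.assoc)
      finally show ?thesis .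
    next
      case (Some \<alpha>)
      have \<alpha>: "1 + d \<le> norm \<alpha>" using d(3) aK Some by blast
      have \<xi>2: "norm \<xi> \<le> 1 + d/(2*(1+3*C1))" using \<xi> by (simp add: \<delta>_def)
      have "ln (norm (blaschke a (F \<xi>) / blaschke a \<xi>)) \<le> K2 * (norm \<xi> - 1) * norm (\<xi> - 1)"
        unfolding Some FF K2_def using combine_some[OF d(1,2) \<alpha> \<epsilon>(2,3) \<xi>(1) \<xi>2 ge] Pe by blast
      also have "\<dots> \<le> C * (norm \<xi> - 1) * norm (\<xi> - 1)"
        using mult_right_mono[of K2 C "(norm \<xi> - 1) * norm (\<xi> - 1)"] te \<epsilon> by (simp add: C_def mult.assoc)
      finally show ?thesis .
    qed
  qed
  show ?thesis using \<delta> C main by blast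
qed

end
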